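(* Let $P$ be any product rule with $P$-product $*$. Then $\overline{f*g}=\overline f*\overline g$ holds for all series $f,g$ if and only if for all series $f,g$ and all $b\in\Sigma$, \[\delta^R_b(f*g)=[\![P]\!]_{[x\mapsto f,\ \dot x\mapsto\delta^R_bf,\ y\mapsto g,\ \dot y\mapsto\delta^R_bg]}.\]
   Context: Let $\Sigma$ be a finite alphabet, $\Sigma^*$ the finite words with empty word $\varepsilon$. A series is $f:\Sigma^*\to\mathbb Q$, $f_w=f(w)$; series form a $\mathbb Q$-vector space under pointwise operations. For $a\in\Sigma$ the left derivative $\delta_af$ is $w\mapsto f(aw)$ and the right derivative $\delta^R_af$ is $w\mapsto f(wa)$. The reversal $\overline f$ of $f$ is $w\mapsto f(\overline w)$, where $\overline w$ is the mirror image of $w$. Terms over $X$: generated by $u,v::=x\mid 0\mid c\cdot u\mid u+v\mid u*v$. A product rule is a term $P$ over $\{x,\dot x,y,\dot y\}$. The $P$-product $*$ and semantics $[\![u]\!]_\varrho$ of terms under valuations $\varrho:X\to$ series are the unique pair with $(f*g)_\varepsilon=f_\varepsilon g_\varepsilon$, $\delta_a(f*g)=[\![P]\!]_{[x\mapsto f,\dot x\mapsto\delta_af,y\mapsto g,\dot y\mapsto\delta_ag]}$, and $[\![\cdot]\!]_\varrho$ interpreting variables via $\varrho$ and constructors by zero, scalar multiplication, addition, $*$. *)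

theory Defs
  imports Main "HOL.Rat"
begin

type_synonym 'a series = "'a list \<Rightarrow> rat"

datatype 'v trm = Var 'v | Zero | Scal rat "'v trm" | Plus "'v trm" "'v trm" | Times "'v trm" "'v trm"

datatype pvar = X | Xd | Y | Yd

fun sem :: "('a series \<Rightarrow> 'a series \<Rightarrow> 'a series) \<Rightarrow> ('v \<Rightarrow> 'a series) \<Rightarrow> 'v trm \<Rightarrow> 'a series" where
  "sem m \<rho> (Var v) = \<rho> v"
| "sem m \<rho> Zero = (\<lambda>w. 0)"
| "sem m \<rho> (Scal c u) = (\<lambda>w. c * sem m \<rho> u w)"
| "sem m \<rho> (Plus u v) = (\<lambda>w. sem m \<rho> u w + sem m \<rho> v w)"
| "sem m \<rho> (Times u v) = m (sem m \<rho> u) (sem m \<rho> v)"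

definition ldiv :: "'a \<Rightarrow> 'a series \<Rightarrow> 'a series" where
  "ldiv a f = (\<lambda>w. f (a # w))"

definition rdiv :: "'a \<Rightarrow> 'a series \<Rightarrow> 'a series" where
  "rdiv a f = (\<lambda>w. f (w @ [a]))"

definition srev :: "'a series \<Rightarrow> 'a series" where
  "srev f = (\<lambda>w. f (rev w))"

definition pval :: "'a series \<Rightarrow> 'a series \<Rightarrow> 'a series \<Rightarrow> 'a series \<Rightarrow> pvar \<Rightarrow> 'a series" where
  "pval f f' g g' = (\<lambda>v. case v of X \<Rightarrow> f | Xd \<Rightarrow> f' | Y \<Rightarrow> g | Yd \<Rightarrow> g')"

definition is_Pprod :: "pvar trm \<Rightarrow> ('a series \<Rightarrow> 'a series \<Rightarrow> 'a series) \<Rightarrow> bool" where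
  "is_Pprod P m \<longleftrightarrow> (\<forall>f g. m f g [] = f [] * g []) \<and>
     (\<forall>a f g. ldiv a (m f g) = sem m (pval f (ldiv a f) g (ldiv a g)) P)"

definition Pprod :: "pvar trm \<Rightarrow> 'a series \<Rightarrow> 'a series \<Rightarrow> 'a series" where
  "Pprod P = (THE m. is_Pprod P m)"

end

theory Submission
  imports Defs
begin

definition eqon :: "nat \<Rightarrow> 'a series \<Rightarrow> 'a series \<Rightarrow> bool" where
  "eqon n f g \<longleftrightarrow> (\<forall>w. length w \<le> n \<longrightarrow> f w = g w)"

definition rel :: "nat \<Rightarrow> ('a series \<Rightarrow> 'a series \<Rightarrow> 'a series) \<Rightarrow> ('a series \<Rightarrow> 'a series \<Rightarrow> 'a series) \<Rightarrow> bool" where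
  "rel n m1 m2 \<longleftrightarrow> (\<forall>f g f' g'. eqon n f f' \<longrightarrow> eqon n g g' \<longrightarrow> eqon n (m1 f g) (m2 f' g'))"

lemma sem_local:
  assumes "rel n m1 m2" "\<And>v. eqon n (\<rho>1 v) (\<rho>2 v)"
  shows "eqon n (sem m1 \<rho>1 u) (sem m2 \<rho>2 u)"
  using assms by (induction u) (auto simp: eqon_def rel_def)

lemma eqon_ldiv: "eqon (Suc n) f f' \<Longrightarrow> eqon n (ldiv a f) (ldiv a f')"
  by (auto simp: eqon_def ldiv_def)

lemma eqon_pval: "eqon (Suc n) f f' \<Longrightarrow> eqon (Suc n) g g' \<Longrightarrow>
   eqon n (pval f (ldiv a f) g (ldiv a g) v) (pval f' (ldiv a f') g' (ldiv a g') v)"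
  by (cases v) (auto simp: pval_def eqon_ldiv, auto simp: eqon_def)

lemma uniq_rel:
  assumes "is_Pprod P m1" "is_Pprod P m2"
  shows "rel n m1 m2"
proof (induction n)
  case 0
  then show ?case using assms by (auto simp: rel_def eqon_def is_Pprod_def)
next
  case (Suc n)
  show ?case unfolding rel_def
  proof (intro allI impI)
    fix f g f' g' :: "'a series"
    assume f: "eqon (Suc n) f f'" and g: "eqon (Suc n) g g'"
    show "eqon (Suc n) (m1 f g) (m2 f' g')"
      unfolding eqon_def
    proof (intro allI impI)
      fix w :: "'a list" assume l: "length w \<le> Suc n"
      show "m1 f g w = m2 f' g' w"
      proof (cases w)
        case Nil
        then show ?thesis using assms f g by (auto simp: is_Pprod_def eqon_def)
      next
        case (Cons a w')
        have e1: "m1 f g (a # w') = sem m1 (pval f (ldiv a f) g (ldiv a g)) P w'"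
          using fun_cong[OF assms(1)[unfolded is_Pprod_def, THEN conjunct2, rule_format, of a f g], of w'] by (simp add: ldiv_def)
        have e2: "m2 f' g' (a # w') = sem m2 (pval f' (ldiv a f') g' (ldiv a g')) P w'"
          using fun_cong[OF assms(2)[unfolded is_Pprod_def, THEN conjunct2, rule_format, of a f' g'], of w'] by (simp add: ldiv_def)
        have "eqon n (sem m1 (pval f (ldiv a f) g (ldiv a g)) P) (sem m2 (pval f' (ldiv a f') g' (ldiv a g')) P)"
          by (rule sem_local[OF Suc eqon_pval[OF f g]])
        then show ?thesis using e1 e2 Cons l by (auto simp: eqon_def)
      qed
    qed
  qed
qed

lemma uniq:
  assumes "is_Pprod P m1" "is_Pprod P m2"
  shows "m1 = m2"
proof (intro ext)
  fix f g :: "'a series" and w :: "'a list"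
  have "rel (length w) m1 m2" by (rule uniq_rel[OF assms])
  then show "m1 f g w = m2 f g w" by (auto simp: rel_def eqon_def)
qed

primrec MM :: "pvar trm \<Rightarrow> nat \<Rightarrow> 'a series \<Rightarrow> 'a series \<Rightarrow> 'a series" where
  "MM P 0 = (\<lambda>f g w. f [] * g [])"
| "MM P (Suc n) = (\<lambda>f g w. case w of [] \<Rightarrow> f [] * g []
      | a # w' \<Rightarrow> sem (MM P n) (pval f (ldiv a f) g (ldiv a g)) P w')"

lemma MM_rel: "n \<le> k \<Longrightarrow> rel n (MM P n) (MM P k)"
proof (induction n arbitrary: k)
  case 0
  then show ?case by (cases k) (auto simp: rel_def eqon_def)
next
  case (Suc n)
  then obtain k' where k: "k = Suc k'" "n \<le> k'" by (cases k) auto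
  have IH: "rel n (MM P n :: 'a series \<Rightarrow> 'a series \<Rightarrow> 'a series) (MM P k')" using Suc.IH[OF k(2)] by simp
  show ?case unfolding rel_def
  proof (intro allI impI)
    fix f g f' g' :: "'a series"
    assume f: "eqon (Suc n) f f'" and g: "eqon (Suc n) g g'"
    show "eqon (Suc n) (MM P (Suc n) f g) (MM P k f' g')"
      unfolding eqon_def
    proof (intro allI impI)
      fix w :: "'a list" assume l: "length w \<le> Suc n"
      show "MM P (Suc n) f g w = MM P k f' g' w"
      proof (cases w)
        case Nil
        then show ?thesis using k f g by (auto simp: eqon_def)
      next
        case (Cons a w')
        have "eqon n (sem (MM P n) (pval f (ldiv a f) g (ldiv a g)) P) (sem (MM P k') (pval f' (ldiv a f') g' (ldiv a g')) P)"
          by (rule sem_local[OF IH eqon_pval[OF f g]])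
        then show ?thesis using Cons l k by (auto simp: eqon_def)
      qed
    qed
  qed
qed

definition MMlim :: "pvar trm \<Rightarrow> 'a series \<Rightarrow> 'a series \<Rightarrow> 'a series" where
  "MMlim P = (\<lambda>f g w. MM P (length w) f g w)"

lemma MM_rel_lim: "rel n (MM P n) (MMlim P)"
  unfolding rel_def eqon_def
proof (intro allI impI)
  fix f g f' g' :: "'a series" and w :: "'a list"
  assume f: "\<forall>w. length w \<le> n \<longrightarrow> f w = f' w" and g: "\<forall>w. length w \<le> n \<longrightarrow> g w = g' w"
    and l: "length w \<le> n"
  have "rel (length w) (MM P (length w)) (MM P n)" using l by (rule MM_rel)
  moreover have "eqon (length w) f' f" "eqon (length w) g' g" using f g l by (auto simp: eqon_def)
  ultimately have "eqon (length w) (MM P (length w) f' g') (MM P n f g)" unfolding rel_def by blast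
  then have "MM P (length w) f' g' w = MM P n f g w" by (simp add: eqon_def)
  then show "MM P n f g w = MMlim P f' g' w" by (simp add: MMlim_def)
qed

lemma exists_Pprod: "is_Pprod P (MMlim P)"
  unfolding is_Pprod_def
proof (intro conjI allI)
  fix f g :: "'a series"
  show "MMlim P f g [] = f [] * g []" by (simp add: MMlim_def)
next
  fix a and f g :: "'a series"
  show "ldiv a (MMlim P f g) = sem (MMlim P) (pval f (ldiv a f) g (ldiv a g)) P"
  proof
    fix w :: "'a list"
    have "eqon (length w) (sem (MM P (length w)) (pval f (ldiv a f) g (ldiv a g)) P)
       (sem (MMlim P) (pval f (ldiv a f) g (ldiv a g)) P)"
      by (rule sem_local[OF MM_rel_lim]) (simp add: eqon_def)
    then show "ldiv a (MMlim P f g) w = sem (MMlim P) (pval f (ldiv a f) g (ldiv a g)) P w"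
      by (simp add: eqon_def ldiv_def MMlim_def)
  qed
qed

lemma Pprod_is: "is_Pprod P (Pprod P)"
  unfolding Pprod_def
proof (rule theI[of "is_Pprod P"])
  show "is_Pprod P (MMlim P)" by (rule exists_Pprod)
next
  fix m assume "is_Pprod P m"
  then show "m = MMlim P" using exists_Pprod by (rule uniq)
qed

lemma Pprod_eq: "is_Pprod P m \<Longrightarrow> Pprod P = m"
  using uniq[OF Pprod_is] by blast

lemma srev_srev[simp]: "srev (srev f) = f" by (simp add: srev_def)

lemma sem_srev:
  "srev (sem m \<rho> u) = sem (\<lambda>h k. srev (m (srev h) (srev k))) (\<lambda>v. srev (\<rho> v)) u"
proof (induction u)
  case (Scal c u)
  show ?case by (simp only: sem.simps Scal.IH[symmetric]) (simp add: srev_def)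
next
  case (Plus u v)
  show ?case by (simp only: sem.simps Plus.IH[symmetric]) (simp add: srev_def)
next
  case (Times u v)
  have "sem (\<lambda>h k. srev (m (srev h) (srev k))) (\<lambda>v. srev (\<rho> v)) (Times u v)
    = srev (m (srev (sem (\<lambda>h k. srev (m (srev h) (srev k))) (\<lambda>v. srev (\<rho> v)) u))
              (srev (sem (\<lambda>h k. srev (m (srev h) (srev k))) (\<lambda>v. srev (\<rho> v)) v)))"
    by (rule sem.simps(5))
  also have "\<dots> = srev (m (sem m \<rho> u) (sem m \<rho> v))"
    by (simp only: Times.IH[symmetric] srev_srev)
  finally show ?case by (simp only: sem.simps)
qed (auto simp: srev_def)

lemma srev_pval: "(\<lambda>v. srev (pval f f' g g' v)) = pval (srev f) (srev f') (srev g) (srev g')"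
proof
  fix v show "srev (pval f f' g g' v) = pval (srev f) (srev f') (srev g) (srev g') v"
    by (cases v) (simp_all add: pval_def)
qed

lemma srev_ldiv: "srev (ldiv b (srev f)) = rdiv b f"
  by (auto simp: srev_def ldiv_def rdiv_def)

lemma srev_rdiv: "srev (rdiv b (srev f)) = ldiv b f"
  by (auto simp: srev_def ldiv_def rdiv_def)

lemma rdiv_srev: "rdiv b (srev h) = srev (ldiv b h)"
  by (auto simp: srev_def ldiv_def rdiv_def)

lemma ldiv_srev: "ldiv b (srev h) = srev (rdiv b h)"
  by (auto simp: srev_def ldiv_def rdiv_def)

theorem mainTheorem15:
  fixes P :: "pvar trm"
  shows "(\<forall>f g :: ('a::finite) series. srev (Pprod P f g) = Pprod P (srev f) (srev g))
     \<longleftrightarrow> (\<forall>(f :: 'a series) g b. rdiv b (Pprod P f g)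
            = sem (Pprod P) (pval f (rdiv b f) g (rdiv b g)) P)"
proof
  assume H: "\<forall>f g :: 'a series. srev (Pprod P f g) = Pprod P (srev f) (srev g)"
  have C: "(\<lambda>h k. srev (Pprod P (srev h) (srev k))) = (Pprod P :: 'a series \<Rightarrow> _)"
  proof (intro ext)
    fix h k :: "'a series" and w
    show "srev (Pprod P (srev h) (srev k)) w = Pprod P h k w"
      using H[rule_format, of "srev h" "srev k"] by (simp only: srev_srev)
  qed
  show "\<forall>(f :: 'a series) g b. rdiv b (Pprod P f g) = sem (Pprod P) (pval f (rdiv b f) g (rdiv b g)) P"
  proof (intro allI)
    fix f g :: "'a series" and b
    have "Pprod P f g = srev (Pprod P (srev f) (srev g))" using H[rule_format, of "srev f" "srev g"]
      by simp
    then have "rdiv b (Pprod P f g) = srev (ldiv b (Pprod P (srev f) (srev g)))"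
      by (simp add: rdiv_srev)
    also have "\<dots> = srev (sem (Pprod P) (pval (srev f) (ldiv b (srev f)) (srev g) (ldiv b (srev g))) P)"
      using Pprod_is[of P, unfolded is_Pprod_def, THEN conjunct2, rule_format, of b "srev f" "srev g"] by simp
    also have "\<dots> = sem (Pprod P) (pval f (rdiv b f) g (rdiv b g)) P"
      unfolding sem_srev C srev_pval srev_ldiv by simp
    finally show "rdiv b (Pprod P f g) = sem (Pprod P) (pval f (rdiv b f) g (rdiv b g)) P" .
  qed
next
  assume H: "\<forall>(f :: 'a series) g b. rdiv b (Pprod P f g) = sem (Pprod P) (pval f (rdiv b f) g (rdiv b g)) P"
  let ?m = "\<lambda>h k :: 'a series. srev (Pprod P (srev h) (srev k))"
  have "is_Pprod P ?m"
    unfolding is_Pprod_def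
  proof (intro conjI allI)
    fix f g :: "'a series"
    show "?m f g [] = f [] * g []"
      using Pprod_is[of P, unfolded is_Pprod_def, THEN conjunct1, rule_format, of "srev f" "srev g"] by (simp add: srev_def)
  next
    fix a and f g :: "'a series"
    have "ldiv a (?m f g) = srev (rdiv a (Pprod P (srev f) (srev g)))"
      by (simp add: ldiv_srev)
    also have "\<dots> = srev (sem (Pprod P) (pval (srev f) (rdiv a (srev f)) (srev g) (rdiv a (srev g))) P)"
      using H by simp
    also have "\<dots> = sem ?m (pval f (ldiv a f) g (ldiv a g)) P"
      unfolding sem_srev srev_pval srev_rdiv by simp
    finally show "ldiv a (?m f g) = sem ?m (pval f (ldiv a f) g (ldiv a g)) P" .
  qed
  then have E: "Pprod P = ?m" by (rule Pprod_eq)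
  show "\<forall>f g :: 'a series. srev (Pprod P f g) = Pprod P (srev f) (srev g)"
  proof (intro allI)
    fix f g :: "'a series"
    show "srev (Pprod P f g) = Pprod P (srev f) (srev g)"
    proof -
      have "Pprod P f g = srev (Pprod P (srev f) (srev g))"
        using fun_cong[OF fun_cong[OF E], of f g] by (simp only:)
      then have "srev (Pprod P f g) = srev (srev (Pprod P (srev f) (srev g)))" by (rule arg_cong)
      then show ?thesis by (simp only: srev_srev)
    qed
  qed
qed

end
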